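(* Let $d\in\mathbb N$. Then: (1) for each $j=1,\dots,d$ and each bounded linear operator $T:C_0(\mathbb R)\to C_0(\mathbb R)$ there is a unique bounded linear operator $\mathcal T^j:C_0(\mathbb R^d)\to C_0(\mathbb R^d)$ such that for every $f\in C_0(\mathbb R^d)$ and every $x\in\mathbb R^d$, $$(\mathcal T^jf)(x_1,\dots,x_d)=\bigl(T(f(x_1,\dots,x_{j-1},\cdot,x_{j+1},\dots,x_d))\bigr)(x_j);$$ (2) for each $j$, the map $V_j:T\mapsto\mathcal T^j$ is a continuous homomorphism of the Banach algebra $\mathcal B(C_0(\mathbb R),C_0(\mathbb R))$ into the Banach algebra $\mathcal B(C_0(\mathbb R^d),C_0(\mathbb R^d))$; (3) for all $S,T\in\mathcal B(C_0(\mathbb R),C_0(\mathbb R))$ and all $i\ne j$, $V_i(S)V_j(T)f=V_j(T)V_i(S)f$ for every $f\in C_0(\mathbb R^d)$.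
   Context: $C_0(\mathbb R^d)$ is the Banach space of continuous real functions on $\mathbb R^d$ tending to $0$ at infinity, with the sup norm; $\mathcal B(X,X)$ is the Banach algebra of bounded linear operators on $X$ with the operator norm. *)

theory Defs
  imports "HOL-Analysis.Analysis"
begin

definition C0 :: "('a::real_normed_vector \<Rightarrow> real) set" where
  "C0 = {f. continuous_on UNIV f \<and> (f \<longlongrightarrow> 0) at_infinity}"

definition supn :: "('a \<Rightarrow> real) \<Rightarrow> real" where
  "supn f = (SUP x. \<bar>f x\<bar>)"

text \<open>Bounded linear operators C_0(X) to C_0(X), as maps on functions
  (only their values on C_0(X) are relevant).\<close>
definition bounded_op :: "(('a::real_normed_vector \<Rightarrow> real) \<Rightarrow> ('a \<Rightarrow> real)) \<Rightarrow> bool" where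
  "bounded_op T \<longleftrightarrow>
     (\<forall>f\<in>C0. T f \<in> C0) \<and>
     (\<forall>f\<in>C0. \<forall>g\<in>C0. \<forall>a b::real.
         T (\<lambda>x. a * f x + b * g x) = (\<lambda>x. a * T f x + b * T g x)) \<and>
     (\<exists>K. \<forall>f\<in>C0. supn (T f) \<le> K * supn f)"

definition opnorm :: "(('a::real_normed_vector \<Rightarrow> real) \<Rightarrow> ('a \<Rightarrow> real)) \<Rightarrow> real" where
  "opnorm T = (SUP f\<in>{f\<in>C0. supn f \<le> 1}. supn (T f))"

definition op_lincomb :: "real \<Rightarrow> (('a \<Rightarrow> real) \<Rightarrow> ('a \<Rightarrow> real)) \<Rightarrow> real
    \<Rightarrow> (('a \<Rightarrow> real) \<Rightarrow> ('a \<Rightarrow> real)) \<Rightarrow> (('a \<Rightarrow> real) \<Rightarrow> ('a \<Rightarrow> real))" where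
  "op_lincomb a S b T = (\<lambda>f x. a * S f x + b * T f x)"

definition coord_upd :: "real^'n \<Rightarrow> 'n \<Rightarrow> real \<Rightarrow> real^'n" where
  "coord_upd x j t = (\<chi> i. if i = j then t else x $ i)"

definition coord_lift :: "'n \<Rightarrow> ((real \<Rightarrow> real) \<Rightarrow> (real \<Rightarrow> real))
    \<Rightarrow> ((real^'n \<Rightarrow> real) \<Rightarrow> (real^'n \<Rightarrow> real))" where
  "coord_lift j T = (\<lambda>f x. T (\<lambda>t. f (coord_upd x j t)) (x $ j))"

end

theory Submission
  imports Defs
begin

lemma C0_iff: "f \<in> C0 \<longleftrightarrow> continuous_on UNIV f \<and> (f \<longlongrightarrow> 0) at_infinity"
  by (simp add: C0_def)

lemma C0_bounded:
  fixes f :: "'a::euclidean_space \<Rightarrow> real"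
  assumes "f \<in> C0" shows "\<exists>B. \<forall>x. \<bar>f x\<bar> \<le> B"
proof -
  from assms have c: "continuous_on UNIV f" and l: "(f \<longlongrightarrow> 0) at_infinity" by (auto simp: C0_def)
  from l obtain b where b: "\<forall>x. norm x \<ge> b \<longrightarrow> dist (f x) 0 < 1"
    unfolding Lim_at_infinity by (meson zero_less_one)
  have "compact (f ` cball 0 b)"
    by (rule compact_continuous_image) (auto intro: continuous_on_subset[OF c])
  then obtain B where B: "\<forall>y\<in>f ` cball 0 b. norm y \<le> B"
    using compact_imp_bounded bounded_iff by metis
  show ?thesis
  proof (intro exI allI)
    fix x
    show "\<bar>f x\<bar> \<le> max B 1"
    proof (cases "norm x \<le> b")
      case True
      then have "norm (f x) \<le> B" using B by auto
      then show ?thesis by simp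
    next
      case False
      then have "b \<le> norm x" by simp
      with b have "dist (f x) 0 < 1" by blast
      then show ?thesis by (simp add: dist_real_def)
    qed
  qed
qed

lemma supn_ge:
  fixes f :: "'a::euclidean_space \<Rightarrow> real"
  assumes "f \<in> C0" shows "\<bar>f x\<bar> \<le> supn f"
proof -
  obtain B where "\<forall>x. \<bar>f x\<bar> \<le> B" using C0_bounded[OF assms] by blast
  then have "bdd_above (range (\<lambda>x. \<bar>f x\<bar>))" by (intro bdd_aboveI2) auto
  then show ?thesis unfolding supn_def by (meson UNIV_I cSUP_upper)
qed

lemma supn_le: "(\<And>x. \<bar>f x\<bar> \<le> c) \<Longrightarrow> supn f \<le> c"
  unfolding supn_def by (rule cSUP_least) auto

lemma supn_nonneg:
  fixes f :: "'a::euclidean_space \<Rightarrow> real"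
  assumes "f \<in> C0" shows "0 \<le> supn f"
  using supn_ge[OF assms, of 0] by linarith

lemma C0_zero: "(\<lambda>x. 0) \<in> C0"
  by (simp add: C0_def)

lemma C0_lin: "f \<in> C0 \<Longrightarrow> g \<in> C0 \<Longrightarrow> (\<lambda>x. a * f x + b * g x) \<in> C0"
  unfolding C0_def
  by (auto intro!: continuous_intros tendsto_add_zero tendsto_mult_right_zero)

lemma C0_scale: "f \<in> C0 \<Longrightarrow> (\<lambda>x. a * f x) \<in> C0"
  unfolding C0_def
  by (auto intro!: continuous_intros tendsto_mult_right_zero)

lemma C0_diff: "f \<in> C0 \<Longrightarrow> g \<in> C0 \<Longrightarrow> (\<lambda>x. f x - g x) \<in> C0"
  using C0_lin[of f g 1 "-1"] by simp

lemma C0_sum: "(\<And>k. k \<in> A \<Longrightarrow> g k \<in> C0) \<Longrightarrow> (\<lambda>x. \<Sum>k\<in>A. g k x) \<in> C0"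
  unfolding C0_def
  by (auto intro!: continuous_intros tendsto_null_sum)

lemma C0_unif:
  fixes f :: "'a::euclidean_space \<Rightarrow> real"
  assumes "f \<in> C0" "e > 0"
  shows "\<exists>d>0. \<forall>a b. dist a b < d \<longrightarrow> \<bar>f a - f b\<bar> < e"
proof -
  from assms have c: "continuous_on UNIV f" and l: "(f \<longlongrightarrow> 0) at_infinity" by (auto simp: C0_def)
  from l obtain R0 where R0: "\<forall>x. norm x \<ge> R0 \<longrightarrow> dist (f x) 0 < e/2"
    unfolding Lim_at_infinity using assms(2) by (meson half_gt_zero)
  define R where "R = max R0 0"
  have R: "\<forall>x. norm x \<ge> R \<longrightarrow> \<bar>f x\<bar> < e/2" using R0 by (auto simp: R_def)
  have "uniformly_continuous_on (cball 0 (R+1)) f"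
    by (rule compact_uniformly_continuous) (auto intro: continuous_on_subset[OF c])
  then obtain d' where d': "d' > 0" "\<forall>x\<in>cball 0 (R+1). \<forall>x'\<in>cball 0 (R+1). dist x' x < d' \<longrightarrow> dist (f x') (f x) < e"
    unfolding uniformly_continuous_on_def using assms(2) by metis
  show ?thesis
  proof (intro exI[of _ "min d' 1"] conjI allI impI)
    show "0 < min d' 1" using d' by simp
    fix a b :: 'a assume ab: "dist a b < min d' 1"
    have t: "norm b \<ge> norm a - dist a b" "norm a \<ge> norm b - dist a b"
      using norm_triangle_ineq2[of a b] norm_triangle_ineq2[of b a] by (auto simp: dist_norm norm_minus_commute)
    show "\<bar>f a - f b\<bar> < e"
    proof (cases "norm a \<le> R + 1 \<and> norm b \<le> R + 1")
      case True then show ?thesis using d'(2) ab by (auto simp: dist_real_def dist_commute)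
    next
      case False
      then have "norm a \<ge> R \<and> norm b \<ge> R" using t ab by auto
      then have "\<bar>f a\<bar> < e/2" "\<bar>f b\<bar> < e/2" using R by blast+
      then show ?thesis by linarith
    qed
  qed
qed

lemma upd_nth [simp]: "coord_upd x j t $ i = (if i = j then t else x $ i)"
  by (simp add: coord_upd_def)

lemma upd_same [simp]: "coord_upd (coord_upd x j t) j s = coord_upd x j s"
  by (simp add: vec_eq_iff)

lemma upd_comm: "i \<noteq> j \<Longrightarrow> coord_upd (coord_upd x j t) i s = coord_upd (coord_upd x i s) j t"
  by (simp add: vec_eq_iff)

lemma upd_alt: "coord_upd x j t = x + (t - x $ j) *\<^sub>R axis j 1"
  by (simp add: vec_eq_iff axis_def)

lemma dist_upd: "dist (coord_upd x j a) (coord_upd x j b) = \<bar>a - b\<bar>"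
proof -
  have "coord_upd x j a - coord_upd x j b = (a - b) *\<^sub>R axis j 1"
    by (simp add: vec_eq_iff axis_def)
  then show ?thesis by (simp add: dist_norm)
qed

lemma norm_upd_ge: "\<bar>t\<bar> \<le> norm (coord_upd x j t)"
  using component_le_norm_cart[of "coord_upd x j t" j] by simp

lemma norm_le_upd: "norm x \<le> norm (coord_upd x j c) + \<bar>x $ j - c\<bar>"
proof -
  have "x = coord_upd x j c + (x $ j - c) *\<^sub>R axis j 1"
    by (simp add: vec_eq_iff axis_def)
  then have "norm x = norm (coord_upd x j c + (x $ j - c) *\<^sub>R axis j 1)" by simp
  also have "\<dots> \<le> norm (coord_upd x j c) + norm ((x $ j - c) *\<^sub>R axis j (1::real))"
    by (rule norm_triangle_ineq)
  finally show ?thesis by simp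
qed

lemma cont_upd_t: "continuous_on UNIV (\<lambda>t. coord_upd x j t)"
  unfolding upd_alt by (intro continuous_intros)

lemma cont_upd_x: "continuous_on UNIV (\<lambda>x. coord_upd x j c)"
  unfolding upd_alt by (intro continuous_intros)

lemma C0_slice:
  fixes f :: "real^'n \<Rightarrow> real"
  assumes "f \<in> C0" shows "(\<lambda>t. f (coord_upd x j t)) \<in> C0"
proof -
  from assms have c: "continuous_on UNIV f" and l: "(f \<longlongrightarrow> 0) at_infinity" by (auto simp: C0_def)
  have "continuous_on UNIV (\<lambda>t. f (coord_upd x j t))"
    by (rule continuous_on_compose2[OF c cont_upd_t]) auto
  moreover have "((\<lambda>t. f (coord_upd x j t)) \<longlongrightarrow> 0) at_infinity"
    unfolding Lim_at_infinity
  proof (intro allI impI)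
    fix e :: real assume "e > 0"
    then obtain b where b: "\<forall>x. norm x \<ge> b \<longrightarrow> dist (f x) 0 < e" using l unfolding Lim_at_infinity by blast
    show "\<exists>b. \<forall>t::real. b \<le> norm t \<longrightarrow> dist (f (coord_upd x j t)) 0 < e"
    proof (intro exI allI impI)
      fix t :: real assume "b \<le> norm t"
      then have "b \<le> norm (coord_upd x j t)" using norm_upd_ge[of t x j] by simp
      then show "dist (f (coord_upd x j t)) 0 < e" using b by blast
    qed
  qed
  ultimately show ?thesis by (simp add: C0_def)
qed

lemma supn_slice:
  fixes f :: "real^'n \<Rightarrow> real"
  assumes "f \<in> C0" shows "supn (\<lambda>t. f (coord_upd x j t)) \<le> supn f"
  by (rule supn_le) (rule supn_ge[OF assms])

lemma C0_prod:
  fixes f :: "real^'n \<Rightarrow> real" and E :: "real \<Rightarrow> real"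
  assumes f: "f \<in> C0" and E: "E \<in> C0"
  shows "(\<lambda>x. f (coord_upd x j c) * E (x $ j)) \<in> C0"
proof -
  from f have fc: "continuous_on UNIV f" and fl: "(f \<longlongrightarrow> 0) at_infinity" by (auto simp: C0_def)
  from E have Ec: "continuous_on UNIV E" and El: "(E \<longlongrightarrow> 0) at_infinity" by (auto simp: C0_def)
  obtain Hb where Hb: "\<forall>x. \<bar>f x\<bar> \<le> Hb" using C0_bounded[OF f] by blast
  obtain Eb where Eb: "\<forall>x. \<bar>E x\<bar> \<le> Eb" using C0_bounded[OF E] by blast
  have c1: "continuous_on UNIV (\<lambda>x. f (coord_upd x j c))"
    by (rule continuous_on_compose2[OF fc cont_upd_x]) auto
  have c2: "continuous_on UNIV (\<lambda>x::real^'n. E (x $ j))"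
    by (rule continuous_on_compose2[OF Ec]) (auto intro: continuous_intros)
  have "continuous_on UNIV (\<lambda>x. f (coord_upd x j c) * E (x $ j))"
    using c1 c2 by (intro continuous_intros)
  moreover have "((\<lambda>x. f (coord_upd x j c) * E (x $ j)) \<longlongrightarrow> 0) at_infinity"
    unfolding Lim_at_infinity
  proof (intro allI impI)
    fix e :: real assume e: "e > 0"
    define H where "H = max Hb 1"
    define F where "F = max Eb 1"
    have H: "H > 0" "\<forall>x. \<bar>f x\<bar> \<le> H" using Hb unfolding H_def by (simp, meson le_max_iff_disj)
    have F: "F > 0" "\<forall>x. \<bar>E x\<bar> \<le> F" using Eb unfolding F_def by (simp, meson le_max_iff_disj)
    obtain R1 where R1: "\<forall>x. norm x \<ge> R1 \<longrightarrow> dist (f x) 0 < e / F"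
      using fl e F unfolding Lim_at_infinity by (meson divide_pos_pos)
    obtain R2 where R2: "\<forall>x. norm x \<ge> R2 \<longrightarrow> dist (E x) 0 < e / H"
      using El e H unfolding Lim_at_infinity by (meson divide_pos_pos)
    show "\<exists>b. \<forall>x::real^'n. b \<le> norm x \<longrightarrow> dist (f (coord_upd x j c) * E (x $ j)) 0 < e"
    proof (intro exI allI impI)
      fix x :: "real^'n" assume xb: "\<bar>R1\<bar> + \<bar>R2\<bar> + \<bar>c\<bar> \<le> norm x"
      show "dist (f (coord_upd x j c) * E (x $ j)) 0 < e"
      proof (cases "\<bar>x $ j\<bar> \<ge> \<bar>R2\<bar>")
        case True
        then have "\<bar>E (x $ j)\<bar> < e / H" using R2 by (simp add: dist_real_def)
        moreover have "\<bar>f (coord_upd x j c)\<bar> \<le> H" using H by blast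
        ultimately have "\<bar>f (coord_upd x j c)\<bar> * \<bar>E (x $ j)\<bar> \<le> H * (e / H)"
          by (intro mult_mono) auto
        also have "\<dots> = e" using H by simp
        finally have le: "\<bar>f (coord_upd x j c) * E (x $ j)\<bar> \<le> e" by (simp add: abs_mult)
        show ?thesis
        proof (cases "f (coord_upd x j c) = 0")
          case True then show ?thesis using e by simp
        next
          case False
          then have "\<bar>f (coord_upd x j c)\<bar> * \<bar>E (x $ j)\<bar> < \<bar>f (coord_upd x j c)\<bar> * (e / H)"
            using \<open>\<bar>E (x $ j)\<bar> < e / H\<close> by (intro mult_strict_left_mono) auto
          also have "\<dots> \<le> H * (e / H)" using H e by (intro mult_right_mono) auto
          finally show ?thesis using H by (simp add: dist_real_def abs_mult)
        qed
      next
        case False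
        have "norm x \<le> norm (coord_upd x j c) + \<bar>x $ j - c\<bar>" by (rule norm_le_upd)
        then have "norm (coord_upd x j c) \<ge> R1" using False xb by linarith
        then have a: "\<bar>f (coord_upd x j c)\<bar> < e / F" using R1 by (simp add: dist_real_def)
        have b: "\<bar>E (x $ j)\<bar> \<le> F" using F by blast
        have "\<bar>f (coord_upd x j c)\<bar> * \<bar>E (x $ j)\<bar> \<le> \<bar>f (coord_upd x j c)\<bar> * F"
          using b by (intro mult_left_mono) auto
        also have "\<dots> < (e / F) * F" using a F by (intro mult_strict_right_mono) auto
        also have "\<dots> = e" using F by simp
        finally show ?thesis by (simp add: dist_real_def abs_mult)
      qed
    qed
  qed
  ultimately show ?thesis by (simp add: C0_def)
qed

definition tent :: "real \<Rightarrow> int \<Rightarrow> real \<Rightarrow> real" where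
  "tent N k u = max 0 (1 - \<bar>N * u - of_int k\<bar>)"

lemma C0_tent:
  assumes N: "N > 0" shows "tent N k \<in> C0"
proof -
  have "continuous_on UNIV (tent N k)"
    unfolding tent_def by (intro continuous_intros)
  moreover have "(tent N k \<longlongrightarrow> 0) at_infinity"
    unfolding Lim_at_infinity
  proof (intro allI impI exI)
    fix e :: real and u :: real assume e: "e > 0" and u: "(\<bar>of_int k\<bar> + 1) / N \<le> norm u"
    then have "\<bar>of_int k\<bar> + 1 \<le> N * \<bar>u\<bar>" using N by (simp add: field_simps)
    then have "\<bar>N * u - of_int k\<bar> \<ge> 1" using N by (auto simp: abs_mult abs_if split: if_splits)
    then have "tent N k u = 0" by (simp add: tent_def)
    then show "dist (tent N k u) 0 < e" using e by simp
  qed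
  ultimately show ?thesis by (simp add: C0_def)
qed

lemma bop_C0: "bounded_op T \<Longrightarrow> f \<in> C0 \<Longrightarrow> T f \<in> C0"
  by (simp add: bounded_op_def)

lemma bop_lin: "bounded_op T \<Longrightarrow> f \<in> C0 \<Longrightarrow> g \<in> C0 \<Longrightarrow>
    T (\<lambda>x. a * f x + b * g x) = (\<lambda>x. a * T f x + b * T g x)"
  by (simp add: bounded_op_def)

lemma bop_scale: "bounded_op T \<Longrightarrow> f \<in> C0 \<Longrightarrow> T (\<lambda>x. c * f x) = (\<lambda>x. c * T f x)"
  using bop_lin[of T f f c 0] by simp

lemma bop_diff: "bounded_op T \<Longrightarrow> f \<in> C0 \<Longrightarrow> g \<in> C0 \<Longrightarrow> T (\<lambda>x. f x - g x) = (\<lambda>x. T f x - T g x)"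
  using bop_lin[of T f g 1 "-1"] by simp

lemma bop_add: "bounded_op T \<Longrightarrow> f \<in> C0 \<Longrightarrow> g \<in> C0 \<Longrightarrow> T (\<lambda>x. f x + g x) = (\<lambda>x. T f x + T g x)"
  using bop_lin[of T f g 1 1] by simp

lemma bop_zero: "bounded_op T \<Longrightarrow> T (\<lambda>x. 0) = (\<lambda>x. 0)"
  using bop_scale[of T "\<lambda>x. 0" 0] C0_zero by simp

lemma bop_sum:
  assumes T: "bounded_op T" and "finite A" and "\<And>k. k \<in> A \<Longrightarrow> g k \<in> C0"
  shows "T (\<lambda>x. \<Sum>k\<in>A. g k x) = (\<lambda>x. \<Sum>k\<in>A. T (g k) x)"
  using assms(2,3)
proof (induction A rule: finite_induct)
  case empty then show ?case using bop_zero[OF T] by simp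
next
  case (insert a A)
  have s: "(\<lambda>x. \<Sum>k\<in>A. g k x) \<in> C0" using insert by (intro C0_sum) auto
  have "T (\<lambda>x. \<Sum>k\<in>insert a A. g k x) = T (\<lambda>x. g a x + (\<Sum>k\<in>A. g k x))"
    using insert by simp
  also have "\<dots> = (\<lambda>x. T (g a) x + T (\<lambda>x. \<Sum>k\<in>A. g k x) x)"
    using bop_add[OF T _ s, of "g a"] insert by simp
  also have "\<dots> = (\<lambda>x. \<Sum>k\<in>insert a A. T (g k) x)"
    using insert by simp
  finally show ?case .
qed

lemma bop_K:
  fixes T :: "('a::euclidean_space \<Rightarrow> real) \<Rightarrow> ('a \<Rightarrow> real)"
  assumes "bounded_op T"
  shows "\<exists>K\<ge>0. \<forall>f\<in>C0. \<forall>x. \<bar>T f x\<bar> \<le> K * supn f"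
proof -
  obtain K where K: "\<forall>f\<in>C0. supn (T f) \<le> K * supn f" using assms by (auto simp: bounded_op_def)
  show ?thesis
  proof (intro exI[of _ "max K 0"] conjI ballI allI)
    fix f :: "'a \<Rightarrow> real" and x assume f: "f \<in> C0"
    have "\<bar>T f x\<bar> \<le> supn (T f)" by (rule supn_ge[OF bop_C0[OF assms f]])
    also have "\<dots> \<le> K * supn f" using K f by blast
    also have "\<dots> \<le> max K 0 * supn f" using supn_nonneg[OF f] by (intro mult_right_mono) auto
    finally show "\<bar>T f x\<bar> \<le> max K 0 * supn f" .
  qed simp
qed

lemma bop_comp:
  fixes U V :: "('a::euclidean_space \<Rightarrow> real) \<Rightarrow> ('a \<Rightarrow> real)"
  assumes U: "bounded_op U" and V: "bounded_op V"
  shows "bounded_op (\<lambda>g. U (V g))"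
proof -
  obtain KU where KU: "\<forall>f\<in>C0. supn (U f) \<le> KU * supn f" "KU \<ge> 0"
    using bop_K[OF U] by (meson supn_le)
  obtain KV where KV: "\<forall>f\<in>C0. supn (V f) \<le> KV * supn f" "KV \<ge> 0"
    using bop_K[OF V] by (meson supn_le)
  have "\<forall>f\<in>C0. supn (U (V f)) \<le> (KU * KV) * supn f"
  proof
    fix f :: "'a \<Rightarrow> real" assume f: "f \<in> C0"
    have "supn (U (V f)) \<le> KU * supn (V f)" using KU bop_C0[OF V f] by blast
    also have "\<dots> \<le> KU * (KV * supn f)" using KV f KU by (intro mult_left_mono) auto
    finally show "supn (U (V f)) \<le> (KU * KV) * supn f" by (simp add: mult.assoc)
  qed
  then show ?thesis using U V unfolding bounded_op_def by (auto simp: bop_lin)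
qed


lemma tent_sum:
  fixes v :: real and M :: nat
  defines "g \<equiv> (\<lambda>k::int. max 0 (1 - \<bar>v - of_int k\<bar>))"
  shows "(\<Sum>k\<in>{-int M..int M}. g k) \<le> 1"
    and "\<bar>v\<bar> \<le> real M - 1 \<Longrightarrow> (\<Sum>k\<in>{-int M..int M}. g k) = 1"
proof -
  define m where "m = \<lfloor>v\<rfloor>"
  have m1: "of_int m \<le> v" "v < of_int m + 1" unfolding m_def by linarith+
  have zero: "g k = 0" if "k \<noteq> m" "k \<noteq> m + 1" for k
  proof -
    have "k \<le> m - 1 \<or> k \<ge> m + 2" using that by linarith
    then have "real_of_int k \<le> real_of_int m - 1 \<or> real_of_int k \<ge> real_of_int m + 2"
    proof
      assume "k \<le> m - 1"
      then have "real_of_int k \<le> real_of_int (m - 1)" by (simp only: of_int_le_iff)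
      then show ?thesis by simp
    next
      assume "k \<ge> m + 2"
      then have "real_of_int k \<ge> real_of_int (m + 2)" by (simp only: of_int_le_iff)
      then show ?thesis by simp
    qed
    then have "\<bar>v - of_int k\<bar> \<ge> 1" using m1 abs_ge_self[of "v - of_int k"] abs_ge_minus_self[of "v - of_int k"] by linarith
    then show ?thesis by (simp add: g_def)
  qed
  have a1: "\<bar>v - of_int m\<bar> = v - of_int m" using m1 by simp
  have a2: "\<bar>v - of_int (m + 1)\<bar> = of_int m + 1 - v" using m1 by simp
  have pair: "g m + g (m + 1) = 1" using m1 unfolding g_def a1 a2 by simp
  have fin: "finite {-int M..int M}" by simp
  have eq: "(\<Sum>k\<in>{-int M..int M}. g k) = (\<Sum>k\<in>{-int M..int M} \<inter> {m, m+1}. g k)"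
    by (rule sum.mono_neutral_right[OF fin]) (auto intro: zero)
  have "(\<Sum>k\<in>{-int M..int M} \<inter> {m, m+1}. g k) \<le> (\<Sum>k\<in>{m, m+1}. g k)"
    by (rule sum_mono2) (auto simp: g_def)
  also have "\<dots> = 1" using pair by simp
  finally show "(\<Sum>k\<in>{-int M..int M}. g k) \<le> 1" using eq by simp
  assume v: "\<bar>v\<bar> \<le> real M - 1"
  have "{-int M..int M} \<inter> {m, m+1} = {m, m+1}" using v m1 by auto
  then show "(\<Sum>k\<in>{-int M..int M}. g k) = 1" using eq pair by simp
qed

lemma upd_id [simp]: "coord_upd x j (x $ j) = x"
  by (simp add: vec_eq_iff)

lemma approx:
  fixes f :: "real^'n \<Rightarrow> real"
  assumes f: "f \<in> C0" and e: "e > 0"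
  shows "\<exists>N>0. \<exists>M::nat. \<forall>y. \<bar>f y - (\<Sum>k\<in>{-int M..int M}. f (coord_upd y j (of_int k / N)) * tent N k (y $ j))\<bar> \<le> e"
proof -
  obtain d where d: "d > 0" "\<forall>a b. dist a b < d \<longrightarrow> \<bar>f a - f b\<bar> < e/2"
    using C0_unif[OF f, of "e/2"] e by auto
  obtain R0 where R0: "\<forall>x. norm x \<ge> R0 \<longrightarrow> dist (f x) 0 < e/2"
  proof -
    have "(f \<longlongrightarrow> 0) at_infinity" using f by (simp add: C0_def)
    then show ?thesis using e that unfolding Lim_at_infinity by (meson half_gt_zero)
  qed
  define R where "R = max R0 1"
  define N where "N = 2 / d"
  define M where "M = nat \<lceil>N * R\<rceil> + 1"
  have N: "N > 0" using d by (simp add: N_def)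
  have R: "R > 0" by (simp add: R_def)
  have c0: "\<lceil>N * R\<rceil> \<ge> 0" using mult_pos_pos[OF N R] by simp
  have "real M - 1 = real (nat \<lceil>N * R\<rceil>)" by (simp add: M_def)
  also have "\<dots> = of_int \<lceil>N * R\<rceil>" using c0 by simp
  finally have NR: "real M - 1 \<ge> N * R" using le_of_int_ceiling[of "N * R"] by linarith
  show ?thesis
  proof (intro exI[of _ N] conjI exI[of _ M] allI)
    show "N > 0" by (fact N)
    fix y :: "real^'n"
    define u where "u = y $ j"
    define A where "A = {-int M..int M}"
    define g where "g = (\<lambda>k::int. max 0 (1 - \<bar>N * u - of_int k\<bar>))"
    define fk where "fk = (\<lambda>k::int. f (coord_upd y j (of_int k / N)))"
    define S where "S = (\<Sum>k\<in>A. g k)"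
    have tg: "tent N k (y $ j) = g k" for k by (simp add: tent_def g_def u_def)
    have S1: "S \<le> 1" unfolding S_def A_def g_def using tent_sum(1) by blast
    have S0: "S \<ge> 0" unfolding S_def g_def by (intro sum_nonneg) auto
    have ident: "f y - (\<Sum>k\<in>A. fk k * g k) = f y * (1 - S) + (\<Sum>k\<in>A. (f y - fk k) * g k)"
      by (simp add: S_def algebra_simps sum_subtractf sum_distrib_left)
    have trm: "\<bar>(f y - fk k) * g k\<bar> \<le> (e/2) * g k" for k
    proof (cases "g k = 0")
      case True then show ?thesis by simp
    next
      case False
      then have "\<bar>N * u - of_int k\<bar> < 1" by (simp add: g_def)
      moreover have "u - of_int k / N = (N * u - of_int k) / N" using N by (simp add: field_simps)
      ultimately have "\<bar>u - of_int k / N\<bar> < 1 / N" using N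
        by (simp add: abs_divide divide_strict_right_mono)
      then have "dist y (coord_upd y j (of_int k / N)) < d"
        using dist_upd[of y j u "of_int k / N"] N by (simp add: u_def N_def)
      then have "\<bar>f y - fk k\<bar> < e/2" using d by (simp add: fk_def)
      moreover have "g k \<ge> 0" by (simp add: g_def)
      ultimately have "\<bar>f y - fk k\<bar> * g k \<le> (e/2) * g k" by (intro mult_right_mono) auto
      then show ?thesis using \<open>g k \<ge> 0\<close> by (simp add: abs_mult)
    qed
    have b1: "\<bar>\<Sum>k\<in>A. (f y - fk k) * g k\<bar> \<le> e/2"
    proof -
      have "\<bar>\<Sum>k\<in>A. (f y - fk k) * g k\<bar> \<le> (\<Sum>k\<in>A. \<bar>(f y - fk k) * g k\<bar>)" by (rule sum_abs)
      also have "\<dots> \<le> (\<Sum>k\<in>A. (e/2) * g k)" by (intro sum_mono trm)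
      also have "\<dots> = (e/2) * S" by (simp add: S_def sum_distrib_left)
      also have "\<dots> \<le> e/2" using S1 e by simp
      finally show ?thesis .
    qed
    have b2: "\<bar>f y * (1 - S)\<bar> \<le> e/2"
    proof (cases "\<bar>N * u\<bar> \<le> real M - 1")
      case True
      then have "S = 1" unfolding S_def A_def g_def using tent_sum(2) by blast
      then show ?thesis using e by simp
    next
      case False
      have h: "\<bar>N * u\<bar> = N * \<bar>u\<bar>" using N by (simp add: abs_mult)
      have "N * \<bar>u\<bar> > N * R" using False NR h by linarith
      then have "\<bar>u\<bar> > R" using N by simp
      then have "norm y \<ge> R0" using component_le_norm_cart[of y j] by (simp add: u_def R_def)
      then have "\<bar>f y\<bar> < e/2" using R0 by (simp add: dist_real_def)
      moreover have "\<bar>1 - S\<bar> \<le> 1" using S0 S1 by simp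
      ultimately have "\<bar>f y\<bar> * \<bar>1 - S\<bar> \<le> e/2 * 1" by (intro mult_mono) auto
      then show ?thesis by (simp add: abs_mult)
    qed
    have "\<bar>f y - (\<Sum>k\<in>A. fk k * g k)\<bar> \<le> e"
      using ident b1 b2 by linarith
    then show "\<bar>f y - (\<Sum>k\<in>{-int M..int M}. f (coord_upd y j (of_int k / N)) * tent N k (y $ j))\<bar> \<le> e"
      by (simp add: tg A_def fk_def)
  qed
qed


lemma C0_uapprox:
  fixes F :: "'a::real_normed_vector \<Rightarrow> real"
  assumes ap: "\<And>e. e > 0 \<Longrightarrow> \<exists>G\<in>C0. \<forall>x. \<bar>F x - G x\<bar> \<le> e"
  shows "F \<in> C0"
proof -
  have "continuous_on UNIV F"
    unfolding continuous_on_iff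
  proof (intro ballI allI impI)
    fix x :: 'a and e :: real assume e: "e > 0"
    obtain G where G: "G \<in> C0" "\<forall>x. \<bar>F x - G x\<bar> \<le> e/3" using ap[of "e/3"] e by auto
    have "continuous_on UNIV G" using G by (simp add: C0_def)
    moreover have e3: "e/3 > 0" using e by simp
    ultimately obtain d where d: "d > 0" "\<forall>x'\<in>UNIV. dist x' x < d \<longrightarrow> dist (G x') (G x) < e/3"
      unfolding continuous_on_iff by blast
    show "\<exists>d>0. \<forall>x'\<in>UNIV. dist x' x < d \<longrightarrow> dist (F x') (F x) < e"
    proof (intro exI[of _ d] conjI ballI impI)
      fix x' assume "dist x' x < d"
      then have "\<bar>G x' - G x\<bar> < e/3" using d by (simp add: dist_real_def)
      moreover have "\<bar>F x' - G x'\<bar> \<le> e/3" "\<bar>F x - G x\<bar> \<le> e/3" using G by auto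
      ultimately show "dist (F x') (F x) < e" unfolding dist_real_def by arith
    qed (fact d)
  qed
  moreover have "(F \<longlongrightarrow> 0) at_infinity"
    unfolding Lim_at_infinity
  proof (intro allI impI)
    fix e :: real assume e: "e > 0"
    obtain G where G: "G \<in> C0" "\<forall>x. \<bar>F x - G x\<bar> \<le> e/2" using ap[of "e/2"] e by auto
    have "(G \<longlongrightarrow> 0) at_infinity" using G by (simp add: C0_def)
    moreover have e2: "e/2 > 0" using e by simp
    ultimately obtain b where b: "\<forall>x. norm x \<ge> b \<longrightarrow> dist (G x) 0 < e/2"
      unfolding Lim_at_infinity by blast
    show "\<exists>b. \<forall>x. b \<le> norm x \<longrightarrow> dist (F x) 0 < e"
    proof (intro exI[of _ b] allI impI)
      fix x :: 'a assume "b \<le> norm x"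
      then have "\<bar>G x\<bar> < e/2" using b by (simp add: dist_real_def)
      moreover have "\<bar>F x - G x\<bar> \<le> e/2" using G by auto
      ultimately show "dist (F x) 0 < e" unfolding dist_real_def by arith
    qed
  qed
  ultimately show ?thesis by (simp add: C0_def)
qed

context
  fixes T :: "(real \<Rightarrow> real) \<Rightarrow> (real \<Rightarrow> real)" and j :: "'n::finite"
  assumes T: "bounded_op T"
begin

lemma lift_lin:
  fixes f g :: "real^'n \<Rightarrow> real"
  assumes f: "f \<in> C0" and g: "g \<in> C0"
  shows "coord_lift j T (\<lambda>x. a * f x + b * g x) = (\<lambda>x. a * coord_lift j T f x + b * coord_lift j T g x)"
proof
  fix x
  have "T (\<lambda>t. a * f (coord_upd x j t) + b * g (coord_upd x j t))
      = (\<lambda>s. a * T (\<lambda>t. f (coord_upd x j t)) s + b * T (\<lambda>t. g (coord_upd x j t)) s)"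
    by (rule bop_lin[OF T C0_slice[OF f] C0_slice[OF g]])
  then show "coord_lift j T (\<lambda>x. a * f x + b * g x) x = a * coord_lift j T f x + b * coord_lift j T g x"
    by (simp add: coord_lift_def)
qed

lemma lift_diff:
  fixes f g :: "real^'n \<Rightarrow> real"
  assumes f: "f \<in> C0" and g: "g \<in> C0"
  shows "coord_lift j T (\<lambda>x. f x - g x) = (\<lambda>x. coord_lift j T f x - coord_lift j T g x)"
  using lift_lin[OF f g, of 1 "-1"] by simp

lemma lift_bound:
  "\<exists>K\<ge>0. \<forall>f\<in>(C0::(real^'n \<Rightarrow> real) set). \<forall>x. \<bar>coord_lift j T f x\<bar> \<le> K * supn f"
proof -
  obtain K where K: "K \<ge> 0" "\<forall>f\<in>C0. \<forall>x. \<bar>T f x\<bar> \<le> K * supn f" using bop_K[OF T] by blast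
  show ?thesis
  proof (intro exI[of _ K] conjI ballI allI)
    fix f :: "real^'n \<Rightarrow> real" and x assume f: "f \<in> C0"
    have "\<bar>coord_lift j T f x\<bar> \<le> K * supn (\<lambda>t. f (coord_upd x j t))"
      using K C0_slice[OF f] by (simp add: coord_lift_def)
    also have "\<dots> \<le> K * supn f" using K supn_slice[OF f] by (intro mult_left_mono) auto
    finally show "\<bar>coord_lift j T f x\<bar> \<le> K * supn f" .
  qed (fact K)
qed

lemma lift_C0:
  fixes f :: "real^'n \<Rightarrow> real"
  assumes f: "f \<in> C0"
  shows "coord_lift j T f \<in> C0"
proof (rule C0_uapprox)
  fix e :: real assume e: "e > 0"
  obtain K where K: "K \<ge> 0" "\<forall>f\<in>(C0::(real^'n \<Rightarrow> real) set). \<forall>x. \<bar>coord_lift j T f x\<bar> \<le> K * supn f"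
    using lift_bound by blast
  have e': "e / (K + 1) > 0" using K e by simp
  obtain N M where N: "N > 0" and M: "\<forall>y. \<bar>f y - (\<Sum>k\<in>{-int M..int M}. f (coord_upd y j (of_int k / N)) * tent N k (y $ j))\<bar> \<le> e / (K + 1)"
    using approx[OF f e', of j] by blast
  define A where "A = {-int M..int M}"
  define fN where "fN = (\<lambda>y. \<Sum>k\<in>A. f (coord_upd y j (of_int k / N)) * tent N k (y $ j))"
  define G where "G = (\<lambda>x. \<Sum>k\<in>A. f (coord_upd x j (of_int k / N)) * T (tent N k) (x $ j))"
  have fN: "fN \<in> C0" unfolding fN_def by (intro C0_sum C0_prod[OF f C0_tent[OF N]])
  have G: "G \<in> C0" unfolding G_def by (intro C0_sum C0_prod[OF f bop_C0[OF T C0_tent[OF N]]])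
  have LG: "coord_lift j T fN x = G x" for x
  proof -
    have "coord_lift j T fN x = T (\<lambda>t. \<Sum>k\<in>A. f (coord_upd x j (of_int k / N)) * tent N k t) (x $ j)"
      by (simp add: coord_lift_def fN_def)
    also have "\<dots> = (\<Sum>k\<in>A. T (\<lambda>t. f (coord_upd x j (of_int k / N)) * tent N k t) (x $ j))"
      using bop_sum[OF T, of A "\<lambda>k t. f (coord_upd x j (of_int k / N)) * tent N k t"]
        C0_scale[OF C0_tent[OF N]] by (simp add: A_def)
    also have "\<dots> = G x" using bop_scale[OF T C0_tent[OF N]] by (simp add: G_def)
    finally show ?thesis .
  qed
  have sd: "supn (\<lambda>y. f y - fN y) \<le> e / (K + 1)"
    by (rule supn_le) (use M in \<open>simp add: fN_def A_def\<close>)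
  show "\<exists>G\<in>C0. \<forall>x. \<bar>coord_lift j T f x - G x\<bar> \<le> e"
  proof (intro bexI[OF _ G] allI)
    fix x
    have "\<bar>coord_lift j T f x - G x\<bar> = \<bar>coord_lift j T (\<lambda>y. f y - fN y) x\<bar>"
      using lift_diff[OF f fN] LG by simp
    also have "\<dots> \<le> K * supn (\<lambda>y. f y - fN y)" using K C0_diff[OF f fN] by blast
    also have "\<dots> \<le> K * (e / (K + 1))" using sd K by (intro mult_left_mono) auto
    also have "\<dots> \<le> e" using K e by (simp add: field_simps)
    finally show "\<bar>coord_lift j T f x - G x\<bar> \<le> e" .
  qed
qed

lemma bop_lift: "bounded_op (coord_lift j T :: (real^'n \<Rightarrow> real) \<Rightarrow> _)"
proof -
  obtain K where K: "K \<ge> 0" "\<forall>f\<in>(C0::(real^'n \<Rightarrow> real) set). \<forall>x. \<bar>coord_lift j T f x\<bar> \<le> K * supn f"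
    using lift_bound by blast
  have "\<forall>f\<in>(C0::(real^'n \<Rightarrow> real) set). supn (coord_lift j T f) \<le> K * supn f"
    using K by (auto intro: supn_le)
  then show ?thesis unfolding bounded_op_def using lift_C0 lift_lin by blast
qed

end

lemma comm_term:
  fixes f :: "real^'n::finite \<Rightarrow> real" and e :: "real \<Rightarrow> real"
  assumes ij: "i \<noteq> j" and S: "bounded_op S" and T: "bounded_op T" and f: "f \<in> C0" and e: "e \<in> C0"
  shows "coord_lift i S (coord_lift j T (\<lambda>y. f (coord_upd y i c) * e (y $ i))) x
       = coord_lift j T (coord_lift i S (\<lambda>y. f (coord_upd y i c) * e (y $ i))) x"
proof -
  have 1: "coord_lift j T (\<lambda>y. f (coord_upd y i c) * e (y $ i)) z = e (z $ i) * coord_lift j T f (coord_upd z i c)" for z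
  proof -
    have "(\<lambda>s. f (coord_upd (coord_upd z j s) i c) * e (coord_upd z j s $ i))
        = (\<lambda>s. e (z $ i) * f (coord_upd (coord_upd z i c) j s))"
      using ij by (simp add: upd_comm mult.commute)
    then have "coord_lift j T (\<lambda>y. f (coord_upd y i c) * e (y $ i)) z
        = T (\<lambda>s. e (z $ i) * f (coord_upd (coord_upd z i c) j s)) (z $ j)"
      by (simp add: coord_lift_def)
    also have "\<dots> = e (z $ i) * T (\<lambda>s. f (coord_upd (coord_upd z i c) j s)) (z $ j)"
      using bop_scale[OF T C0_slice[OF f]] by simp
    also have "\<dots> = e (z $ i) * coord_lift j T f (coord_upd z i c)"
      using ij by (simp add: coord_lift_def)
    finally show ?thesis .
  qed
  have 2: "coord_lift i S (\<lambda>y. f (coord_upd y i c) * e (y $ i)) z = f (coord_upd z i c) * S e (z $ i)" for z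
  proof -
    have "coord_lift i S (\<lambda>y. f (coord_upd y i c) * e (y $ i)) z = S (\<lambda>t. f (coord_upd z i c) * e t) (z $ i)"
      by (simp add: coord_lift_def)
    also have "\<dots> = f (coord_upd z i c) * S e (z $ i)" using bop_scale[OF S e] by simp
    finally show ?thesis .
  qed
  define \<beta> where "\<beta> = coord_lift j T f (coord_upd x i c)"
  have "coord_lift i S (coord_lift j T (\<lambda>y. f (coord_upd y i c) * e (y $ i))) x
      = coord_lift i S (\<lambda>z. e (z $ i) * coord_lift j T f (coord_upd z i c)) x"
    using 1 by (simp add: coord_lift_def)
  also have "\<dots> = S (\<lambda>t. \<beta> * e t) (x $ i)"
    by (simp add: coord_lift_def \<beta>_def mult.commute)
  also have "\<dots> = \<beta> * S e (x $ i)" using bop_scale[OF S e] by simp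
  finally have L: "coord_lift i S (coord_lift j T (\<lambda>y. f (coord_upd y i c) * e (y $ i))) x = \<beta> * S e (x $ i)" .
  have "coord_lift j T (coord_lift i S (\<lambda>y. f (coord_upd y i c) * e (y $ i))) x
      = coord_lift j T (\<lambda>z. f (coord_upd z i c) * S e (z $ i)) x"
    using 2 by (simp add: coord_lift_def)
  also have "\<dots> = T (\<lambda>s. S e (x $ i) * f (coord_upd (coord_upd x i c) j s)) (x $ j)"
    using ij by (simp add: coord_lift_def upd_comm mult.commute)
  also have "\<dots> = S e (x $ i) * T (\<lambda>s. f (coord_upd (coord_upd x i c) j s)) (x $ j)"
    using bop_scale[OF T C0_slice[OF f]] by simp
  also have "\<dots> = S e (x $ i) * \<beta>"
    using ij by (simp add: coord_lift_def \<beta>_def)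
  finally show ?thesis using L by simp
qed


lemma eps_eq:
  fixes a b C :: real
  assumes C: "C \<ge> 0" and h: "\<And>e. e > 0 \<Longrightarrow> \<bar>a - b\<bar> \<le> C * e"
  shows "a = b"
proof (rule ccontr)
  assume "a \<noteq> b"
  then have p: "\<bar>a - b\<bar> > 0" by simp
  define e where "e = \<bar>a - b\<bar> / (C + 1)"
  have e: "e > 0" using p C by (simp add: e_def)
  have "C * e < (C + 1) * e" using e by simp
  also have "\<dots> = \<bar>a - b\<bar>" using C by (simp add: e_def)
  finally show False using h[OF e] by simp
qed

lemma comm:
  fixes f :: "real^'n::finite \<Rightarrow> real"
  assumes ij: "i \<noteq> j" and S: "bounded_op S" and T: "bounded_op T" and f: "f \<in> C0"
  shows "coord_lift i S (coord_lift j T f) = coord_lift j T (coord_lift i S f)"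
proof
  fix x
  define W where "W = (\<lambda>g. coord_lift i S (coord_lift j T g :: real^'n \<Rightarrow> real))"
  define W' where "W' = (\<lambda>g. coord_lift j T (coord_lift i S g :: real^'n \<Rightarrow> real))"
  have W: "bounded_op W" unfolding W_def by (rule bop_comp[OF bop_lift[OF S] bop_lift[OF T]])
  have W': "bounded_op W'" unfolding W'_def by (rule bop_comp[OF bop_lift[OF T] bop_lift[OF S]])
  obtain K1 where K1: "K1 \<ge> 0" "\<forall>f\<in>C0. \<forall>x. \<bar>W f x\<bar> \<le> K1 * supn f" using bop_K[OF W] by blast
  obtain K2 where K2: "K2 \<ge> 0" "\<forall>f\<in>C0. \<forall>x. \<bar>W' f x\<bar> \<le> K2 * supn f" using bop_K[OF W'] by blast
  have "W f x = W' f x"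
  proof (rule eps_eq)
    show "K1 + K2 \<ge> 0" using K1 K2 by simp
    fix e :: real assume e: "e > 0"
    obtain N M where N: "N > 0" and M: "\<forall>y. \<bar>f y - (\<Sum>k\<in>{-int M..int M}. f (coord_upd y i (of_int k / N)) * tent N k (y $ i))\<bar> \<le> e"
      using approx[OF f e, of i] by blast
    define A where "A = {-int M..int M}"
    define gk where "gk = (\<lambda>k y. f (coord_upd y i (of_int k / N)) * tent N k (y $ i))"
    define fN where "fN = (\<lambda>y. \<Sum>k\<in>A. gk k y)"
    have gk: "gk k \<in> C0" for k unfolding gk_def by (rule C0_prod[OF f C0_tent[OF N]])
    have fN: "fN \<in> C0" unfolding fN_def by (intro C0_sum gk)
    have fin: "finite A" by (simp add: A_def)
    have eq: "W fN x = W' fN x"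
    proof -
      have "W fN x = (\<Sum>k\<in>A. W (gk k) x)" unfolding fN_def using bop_sum[OF W fin, of gk] gk by simp
      also have "\<dots> = (\<Sum>k\<in>A. W' (gk k) x)"
        unfolding W_def W'_def gk_def using comm_term[OF ij S T f C0_tent[OF N]] by simp
      also have "\<dots> = W' fN x" unfolding fN_def using bop_sum[OF W' fin, of gk] gk by simp
      finally show ?thesis .
    qed
    have sd: "supn (\<lambda>y. f y - fN y) \<le> e"
      by (rule supn_le) (use M in \<open>simp add: fN_def A_def gk_def\<close>)
    have d1: "\<bar>W f x - W fN x\<bar> \<le> K1 * e"
    proof -
      have "\<bar>W f x - W fN x\<bar> = \<bar>W (\<lambda>y. f y - fN y) x\<bar>" using bop_diff[OF W f fN] by simp
      also have "\<dots> \<le> K1 * supn (\<lambda>y. f y - fN y)" using K1 C0_diff[OF f fN] by blast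
      also have "\<dots> \<le> K1 * e" using sd K1 by (intro mult_left_mono) auto
      finally show ?thesis .
    qed
    have d2: "\<bar>W' f x - W' fN x\<bar> \<le> K2 * e"
    proof -
      have "\<bar>W' f x - W' fN x\<bar> = \<bar>W' (\<lambda>y. f y - fN y) x\<bar>" using bop_diff[OF W' f fN] by simp
      also have "\<dots> \<le> K2 * supn (\<lambda>y. f y - fN y)" using K2 C0_diff[OF f fN] by blast
      also have "\<dots> \<le> K2 * e" using sd K2 by (intro mult_left_mono) auto
      finally show ?thesis .
    qed
    show "\<bar>W f x - W' f x\<bar> \<le> (K1 + K2) * e"
      using d1 d2 eq by (simp add: distrib_right)
  qed
  then show "coord_lift i S (coord_lift j T f) x = coord_lift j T (coord_lift i S f) x"
    by (simp add: W_def W'_def)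
qed

lemma bop_lincomb:
  fixes S T :: "('a::euclidean_space \<Rightarrow> real) \<Rightarrow> ('a \<Rightarrow> real)"
  assumes S: "bounded_op S" and T: "bounded_op T"
  shows "bounded_op (op_lincomb a S b T)"
proof -
  obtain K1 where K1: "K1 \<ge> 0" "\<forall>f\<in>C0. \<forall>x. \<bar>S f x\<bar> \<le> K1 * supn f" using bop_K[OF S] by blast
  obtain K2 where K2: "K2 \<ge> 0" "\<forall>f\<in>C0. \<forall>x. \<bar>T f x\<bar> \<le> K2 * supn f" using bop_K[OF T] by blast
  have c: "\<forall>f\<in>C0. op_lincomb a S b T f \<in> C0"
    unfolding op_lincomb_def using bop_C0[OF S] bop_C0[OF T] by (auto intro: C0_lin)
  have l: "\<forall>f\<in>C0. \<forall>g\<in>C0. \<forall>c d::real. op_lincomb a S b T (\<lambda>x. c * f x + d * g x)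
      = (\<lambda>x. c * op_lincomb a S b T f x + d * op_lincomb a S b T g x)"
    by (simp add: op_lincomb_def bop_lin[OF S] bop_lin[OF T] algebra_simps)
  have "\<forall>f\<in>C0. supn (op_lincomb a S b T f) \<le> (\<bar>a\<bar> * K1 + \<bar>b\<bar> * K2) * supn f"
  proof
    fix f :: "'a \<Rightarrow> real" assume f: "f \<in> C0"
    show "supn (op_lincomb a S b T f) \<le> (\<bar>a\<bar> * K1 + \<bar>b\<bar> * K2) * supn f"
    proof (rule supn_le)
      fix x
      have "\<bar>a * S f x + b * T f x\<bar> \<le> \<bar>a\<bar> * \<bar>S f x\<bar> + \<bar>b\<bar> * \<bar>T f x\<bar>"
        by (metis abs_mult abs_triangle_ineq)
      also have "\<dots> \<le> \<bar>a\<bar> * (K1 * supn f) + \<bar>b\<bar> * (K2 * supn f)"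
        using K1 K2 f by (intro add_mono mult_left_mono) auto
      finally show "\<bar>op_lincomb a S b T f x\<bar> \<le> (\<bar>a\<bar> * K1 + \<bar>b\<bar> * K2) * supn f"
        by (simp add: op_lincomb_def algebra_simps)
    qed
  qed
  then show ?thesis unfolding bounded_op_def using c l by blast
qed

lemma opnorm_lift:
  fixes D :: "(real \<Rightarrow> real) \<Rightarrow> (real \<Rightarrow> real)" and j :: "'n::finite"
  assumes D: "bounded_op D"
  shows "opnorm (coord_lift j D :: (real^'n \<Rightarrow> real) \<Rightarrow> _) \<le> opnorm D"
proof -
  obtain K where K: "K \<ge> 0" "\<forall>f\<in>C0. \<forall>x. \<bar>D f x\<bar> \<le> K * supn f" using bop_K[OF D] by blast
  have bdd: "bdd_above ((\<lambda>f. supn (D f)) ` {f\<in>C0. supn f \<le> 1})"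
  proof (rule bdd_aboveI2)
    fix f :: "real \<Rightarrow> real" assume f: "f \<in> {f\<in>C0. supn f \<le> 1}"
    show "supn (D f) \<le> K"
    proof (rule supn_le)
      fix x
      have "\<bar>D f x\<bar> \<le> K * supn f" using K f by blast
      also have "\<dots> \<le> K * 1" using K f by (intro mult_left_mono) auto
      finally show "\<bar>D f x\<bar> \<le> K" by simp
    qed
  qed
  have ne: "{f\<in>(C0::(real^'n \<Rightarrow> real) set). supn f \<le> 1} \<noteq> {}"
    using C0_zero supn_le[of "\<lambda>x::real^'n. 0" 1] by auto
  show ?thesis
    unfolding opnorm_def
  proof (rule cSUP_least[OF ne])
    fix f :: "real^'n \<Rightarrow> real" assume f: "f \<in> {f\<in>C0. supn f \<le> 1}"
    show "supn (coord_lift j D f) \<le> (SUP f\<in>{f\<in>C0. supn f \<le> 1}. supn (D f))"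
    proof (rule supn_le)
      fix x
      define h where "h = (\<lambda>t. f (coord_upd x j t))"
      have h: "h \<in> C0" "supn h \<le> 1" using C0_slice supn_slice f unfolding h_def by (fastforce intro: order_trans)+
      have "\<bar>coord_lift j D f x\<bar> = \<bar>D h (x $ j)\<bar>" by (simp add: coord_lift_def h_def)
      also have "\<dots> \<le> supn (D h)" by (rule supn_ge[OF bop_C0[OF D h(1)]])
      also have "\<dots> \<le> (SUP f\<in>{f\<in>C0. supn f \<le> 1}. supn (D f))"
        by (rule cSUP_upper[OF _ bdd]) (use h in auto)
      finally show "\<bar>coord_lift j D f x\<bar> \<le> (SUP f\<in>{f\<in>C0. supn f \<le> 1}. supn (D f))" .
    qed
  qed
qed


lemma part1:
  fixes T :: "(real \<Rightarrow> real) \<Rightarrow> (real \<Rightarrow> real)" and j :: "'n::finite"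
  assumes T: "bounded_op T"
  shows "\<exists>U::(real^'n \<Rightarrow> real) \<Rightarrow> (real^'n \<Rightarrow> real). bounded_op U \<and>
          (\<forall>f\<in>C0. \<forall>x. U f x = T (\<lambda>t. f (coord_upd x j t)) (x $ j))"
proof (intro exI[of _ "coord_lift j T"] conjI)
  show "bounded_op (coord_lift j T :: (real^'n \<Rightarrow> real) \<Rightarrow> _)" by (rule bop_lift[OF T])
  show "\<forall>f\<in>C0. \<forall>x. coord_lift j T f x = T (\<lambda>t. f (coord_upd x j t)) (x $ j)"
    by (simp add: coord_lift_def)
qed

lemma part2d:
  fixes T :: "(real \<Rightarrow> real) \<Rightarrow> (real \<Rightarrow> real)" and j :: "'n::finite"
  assumes T: "bounded_op T" and e: "e > 0"
  shows "\<exists>\<delta>>0. \<forall>S. bounded_op S \<and> opnorm (op_lincomb 1 S (-1) T) < \<delta> \<longrightarrow>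
            opnorm (op_lincomb 1 (coord_lift j S) (-1) (coord_lift j T) :: (real^'n \<Rightarrow> real) \<Rightarrow> _) < e"
proof (intro exI[of _ e] conjI allI impI)
  show "e > 0" by (fact e)
  fix S assume S: "bounded_op S \<and> opnorm (op_lincomb 1 S (-1) T) < e"
  have eq: "op_lincomb 1 (coord_lift j S) (-1) (coord_lift j T) = (coord_lift j (op_lincomb 1 S (-1) T) :: (real^'n \<Rightarrow> real) \<Rightarrow> _)"
    by (simp add: op_lincomb_def coord_lift_def)
  have "opnorm (coord_lift j (op_lincomb 1 S (-1) T) :: (real^'n \<Rightarrow> real) \<Rightarrow> _) \<le> opnorm (op_lincomb 1 S (-1) T)"
    by (rule opnorm_lift[OF bop_lincomb]) (use S T in auto)
  then show "opnorm (op_lincomb 1 (coord_lift j S) (-1) (coord_lift j T) :: (real^'n \<Rightarrow> real) \<Rightarrow> _) < e"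
    using S eq by simp
qed

theorem lemma1p3p2:
  fixes dummy :: "'n::finite itself"
  shows
   "(\<forall>(j::'n) (T::(real \<Rightarrow> real) \<Rightarrow> (real \<Rightarrow> real)). bounded_op T \<longrightarrow>
       (\<exists>U::(real^'n \<Rightarrow> real) \<Rightarrow> (real^'n \<Rightarrow> real). bounded_op U \<and>
          (\<forall>f\<in>C0. \<forall>x. U f x = T (\<lambda>t. f (coord_upd x j t)) (x $ j))) \<and>
       (\<forall>U U'::(real^'n \<Rightarrow> real) \<Rightarrow> (real^'n \<Rightarrow> real).
          bounded_op U \<and> (\<forall>f\<in>C0. \<forall>x. U f x = T (\<lambda>t. f (coord_upd x j t)) (x $ j)) \<and>
          bounded_op U' \<and> (\<forall>f\<in>C0. \<forall>x. U' f x = T (\<lambda>t. f (coord_upd x j t)) (x $ j))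
          \<longrightarrow> (\<forall>f\<in>C0. U f = U' f)))
    \<and>
    (\<forall>j::'n.
       (\<forall>T. bounded_op T \<longrightarrow> bounded_op (coord_lift j T)) \<and>
       (\<forall>S T a b. bounded_op S \<and> bounded_op T \<longrightarrow>
          (\<forall>f\<in>C0. coord_lift j (op_lincomb a S b T) f
                    = op_lincomb a (coord_lift j S) b (coord_lift j T) f)) \<and>
       (\<forall>S T. bounded_op S \<and> bounded_op T \<longrightarrow>
          (\<forall>f\<in>C0. coord_lift j (S \<circ> T) f = coord_lift j S (coord_lift j T f))) \<and>
       (\<forall>T. bounded_op T \<longrightarrow> (\<forall>e>0. \<exists>\<delta>>0. \<forall>S. bounded_op S \<and>
            opnorm (op_lincomb 1 S (-1) T) < \<delta> \<longrightarrow>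
            opnorm (op_lincomb 1 (coord_lift j S) (-1) (coord_lift j T)) < e)))
    \<and>
    (\<forall>(i::'n) (j::'n) S T. i \<noteq> j \<and> bounded_op S \<and> bounded_op T \<longrightarrow>
       (\<forall>f\<in>(C0 :: (real^'n \<Rightarrow> real) set).
          coord_lift i S (coord_lift j T f) = coord_lift j T (coord_lift i S f)))"

  apply (intro conjI allI impI)
  apply (erule part1)
  apply (auto intro!: ext)[1]
  apply (erule bop_lift)
  apply (simp add: op_lincomb_def coord_lift_def)
  apply (simp add: coord_lift_def)
  apply (erule part2d, assumption)
  apply (blast intro: comm)
  done

end
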